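(* With notation as below, the inequality \[ \mathbb E\bigl(|\mathcal T_1|-1+t\bigr)^{\alpha}\le \mathbb E\bigl(|\mathcal T_2|-1+t\bigr)^{\alpha} \] holds for all negative integers $\alpha$ and all $t\in(0,\infty)$ if and only if $\Phi_1(t)\le\Phi_2(t)$ for all $t\in(0,1)$; and in that case the inequality holds for all real $\alpha<0$ and all $t\in(0,\infty)$.
   Context: For $j=1,2$, let $\xi_j$ be a random variable with values in $\{0,1,2,\dots\}$ with $\mathbb E\xi_j=1$ and $0<\operatorname{Var}\xi_j<\infty$, with probability generating function $\Phi_j(t)=\mathbb E t^{\xi_j}$, and let $\mathcal T_j$ be a Galton–Watson tree with offspring distribution $\xi_j$; $|\mathcal T_j|$ is its number of vertices. *)

theory Defs
  imports "HOL-Probability.Probability"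
begin

text \<open>Finite rooted plane (ordered) trees; a vertex is a node with its list of children.\<close>
datatype ptree = Node "ptree list"

fun tsize :: "ptree \<Rightarrow> nat" where
  "tsize (Node ts) = Suc (sum_list (map tsize ts))"

text \<open>Galton--Watson probability of a given finite plane tree: the product over all
  vertices v of p(number of children of v).\<close>
fun gw_weight :: "(nat \<Rightarrow> real) \<Rightarrow> ptree \<Rightarrow> real" where
  "gw_weight p (Node ts) = p (length ts) * prod_list (map (gw_weight p) ts)"

text \<open>P(|T| = n) for the Galton--Watson tree T with offspring distribution xi
  (the set of plane trees with n vertices is finite).\<close>
definition gw_size_prob :: "nat pmf \<Rightarrow> nat \<Rightarrow> real" where
  "gw_size_prob xi n = (\<Sum>t\<in>{t. tsize t = n}. gw_weight (pmf xi) t)"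

text \<open>E (|T| - 1 + t) powr alpha, summing over the values |T| = n+1, n \<ge> 0.\<close>
definition gw_moment :: "nat pmf \<Rightarrow> real \<Rightarrow> real \<Rightarrow> real" where
  "gw_moment xi \<alpha> t = (\<Sum>n. gw_size_prob xi (Suc n) * (real n + t) powr \<alpha>)"

definition pgf :: "nat pmf \<Rightarrow> real \<Rightarrow> real" where
  "pgf xi t = measure_pmf.expectation xi (\<lambda>k. t ^ k)"

definition critical_finvar :: "nat pmf \<Rightarrow> bool" where
  "critical_finvar xi \<longleftrightarrow>
     measure_pmf.expectation xi real = 1 \<and>
     integrable (measure_pmf xi) (\<lambda>k. (real k)\<^sup>2) \<and>
     measure_pmf.variance xi real > 0"

end

theory Submission
  imports Defs
begin


lemma tsize_pos: "tsize t \<ge> 1"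
  by (cases t) auto

lemma finite_tsize_le: "finite {t. tsize t \<le> n}"
proof (induction n rule: less_induct)
  case (less n)
  show ?case
  proof (cases n)
    case 0
    have ne: "tsize t \<noteq> 0" for t using tsize_pos[of t] by linarith
    then have "{t. tsize t \<le> n} = {}" using 0 by auto
    then show ?thesis by simp
  next
    case (Suc m)
    have fin: "finite {ts. set ts \<subseteq> {t. tsize t \<le> m} \<and> length ts \<le> m}"
      using less Suc by (intro finite_lists_length_le) auto
    have mem: "sum_list (map tsize ts) \<le> m \<Longrightarrow> set ts \<subseteq> {t. tsize t \<le> m} \<and> length ts \<le> m" for ts
    proof
      assume a: "sum_list (map tsize ts) \<le> m"
      show "set ts \<subseteq> {t. tsize t \<le> m}"
      proof
        fix t assume "t \<in> set ts"
        then have "tsize t \<le> sum_list (map tsize ts)"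
          by (simp add: member_le_sum_list)
        then show "t \<in> {t. tsize t \<le> m}" using a by simp
      qed
      have "length ts = sum_list (map (\<lambda>_. 1::nat) ts)" by (induction ts) auto
      also have "\<dots> \<le> sum_list (map tsize ts)" using tsize_pos by (intro sum_list_mono) auto
      finally show "length ts \<le> m" using a by simp
    qed
    have "{t. tsize t \<le> n} \<subseteq> Node ` {ts. set ts \<subseteq> {t. tsize t \<le> m} \<and> length ts \<le> m}"
    proof
      fix t assume "t \<in> {t. tsize t \<le> n}"
      then obtain ts where t: "t = Node ts" "sum_list (map tsize ts) \<le> m" using Suc by (cases t) auto
      then show "t \<in> Node ` {ts. set ts \<subseteq> {t. tsize t \<le> m} \<and> length ts \<le> m}" using mem by auto
    qed
    then show ?thesis using fin finite_subset by blast
  qed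
qed

lemma finite_tsize_eq: "finite {t. tsize t = n}"
  by (rule finite_subset[OF _ finite_tsize_le[of n]]) auto



abbreviation NI :: "('a \<Rightarrow> ennreal) \<Rightarrow> ennreal" where
  "NI f \<equiv> \<integral>\<^sup>+ x. f x \<partial>count_space UNIV"

lemma NI_list_len:
  fixes f :: "'a \<Rightarrow> ennreal"
  shows "NI (\<lambda>ts. if length ts = k then prod_list (map f ts) else 0) = (NI f)^k"
proof (induction k)
  case 0
  have e: "(\<lambda>ts::'a list. if length ts = 0 then prod_list (map f ts) else 0) = indicator {[]}"
    by (rule ext) (simp add: indicator_def)
  have i: "NI (indicator {[]} :: 'a list \<Rightarrow> ennreal) = 1"
    using nn_integral_indicator[of "{[]::'a list}" "count_space UNIV"] by simp
  show ?case by (simp only: e power_0 i)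
next
  case (Suc k)
  define h where "h = (\<lambda>ts. if length ts = Suc k then prod_list (map f ts) else 0)"
  have "NI h = (\<integral>\<^sup>+ ts. h ts \<partial>count_space {ts. ts \<noteq> []})"
    by (rule nn_integral_count_space_eq) (auto simp: h_def)
  also have "\<dots> = (\<integral>\<^sup>+ p. h (fst p # snd p) \<partial>count_space UNIV)"
  proof -
    have "bij_betw (\<lambda>p. fst p # snd p) UNIV {ts. ts \<noteq> []}"
      by (rule bij_betwI[where g="\<lambda>ts. (hd ts, tl ts)"]) auto
    from nn_integral_bij_count_space[OF this, of h] show ?thesis by simp
  qed
  also have "\<dots> = (\<integral>\<^sup>+ t. \<integral>\<^sup>+ ts. h (t # ts) \<partial>count_space UNIV \<partial>count_space UNIV)"
    using nn_integral_fst_count_space[of "\<lambda>p. h (fst p # snd p)"] by simp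
  also have "\<dots> = (\<integral>\<^sup>+ t. f t * NI (\<lambda>ts. if length ts = k then prod_list (map f ts) else 0) \<partial>count_space UNIV)"
  proof (rule nn_integral_cong)
    fix t
    have "(\<lambda>ts. h (t # ts)) = (\<lambda>ts. f t * (if length ts = k then prod_list (map f ts) else 0))"
      by (auto simp: h_def)
    then show "(\<integral>\<^sup>+ ts. h (t # ts) \<partial>count_space UNIV) = f t * NI (\<lambda>ts. if length ts = k then prod_list (map f ts) else 0)"
      by (simp add: nn_integral_cmult)
  qed
  also have "\<dots> = NI f * (NI f)^k"
    by (simp add: Suc nn_integral_multc)
  finally show ?case by (simp add: h_def)
qed

lemma NI_list:
  fixes f :: "'a \<Rightarrow> ennreal" and c :: "nat \<Rightarrow> ennreal"
  shows "NI (\<lambda>ts. c (length ts) * prod_list (map f ts)) = (\<Sum>k. c k * (NI f)^k)"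
proof -
  have "NI (\<lambda>ts. c (length ts) * prod_list (map f ts))
      = NI (\<lambda>ts. \<Sum>k. c k * (if length ts = k then prod_list (map f ts) else 0))"
  proof (intro nn_integral_cong)
    fix ts :: "'a list"
    have "(\<lambda>k. c k * (if length ts = k then prod_list (map f ts) else 0))
       = (\<lambda>k. if k = length ts then c (length ts) * prod_list (map f ts) else 0)"
      by auto
    then show "c (length ts) * prod_list (map f ts) = (\<Sum>k. c k * (if length ts = k then prod_list (map f ts) else 0))"
      using sums_unique[OF sums_single[of "length ts" "\<lambda>_. c (length ts) * prod_list (map f ts)"]] by simp
  qed
  also have "\<dots> = (\<Sum>k. NI (\<lambda>ts. c k * (if length ts = k then prod_list (map f ts) else 0)))"
    by (rule nn_integral_suminf) simp
  also have "\<dots> = (\<Sum>k. c k * (NI f)^k)"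
    by (subst nn_integral_cmult) (simp_all add: NI_list_len)
  finally show ?thesis .
qed

lemma NI_Node: "NI (g :: ptree \<Rightarrow> ennreal) = NI (\<lambda>ts. g (Node ts))"
proof -
  have "bij_betw Node UNIV UNIV"
    by (rule bij_betwI[where g="\<lambda>t. case t of Node ts \<Rightarrow> ts"]) (auto split: ptree.splits)
  from nn_integral_bij_count_space[OF this, of g] show ?thesis by simp
qed



fun Wt :: "(nat \<Rightarrow> ennreal) \<Rightarrow> ennreal \<Rightarrow> ptree \<Rightarrow> ennreal" where
  "Wt p x (Node ts) = x * (p (length ts) * prod_list (map (Wt p x) ts))"

lemma gw_weight_nonneg: "gw_weight (pmf xi) t \<ge> 0"
proof (induction t)
  case (Node ts)
  then show ?case by (auto intro!: mult_nonneg_nonneg prod_list_nonneg)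
qed

lemma prod_list_ennreal: "(\<And>t. t \<in> set ts \<Longrightarrow> g t \<ge> 0) \<Longrightarrow>
   prod_list (map (\<lambda>t. ennreal (g t)) ts) = ennreal (prod_list (map g ts))"
proof (induction ts)
  case (Cons a ts)
  have "0 \<le> prod_list (map g ts)" by (rule prod_list_nonneg) (use Cons.prems in auto)
  moreover have "0 \<le> g a" using Cons.prems by auto
  ultimately show ?case using Cons by (simp add: ennreal_mult)
qed simp

lemma pow_tsize: "(x::real) ^ sum_list (map tsize ts) = prod_list (map (\<lambda>t. x ^ tsize t) ts)"
  by (induction ts) (auto simp: power_add)

lemma prod_list_mult_map: "prod_list (map (\<lambda>t. (f t :: real) * g t) ts) = prod_list (map f ts) * prod_list (map g ts)"
  by (induction ts) (auto simp: algebra_simps)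

lemma Wt_real:
  assumes "x \<ge> 0"
  shows "Wt (\<lambda>k. ennreal (pmf xi k)) (ennreal x) t = ennreal (gw_weight (pmf xi) t * x ^ tsize t)"
proof (induction t)
  case (Node ts)
  have "map (Wt (\<lambda>k. ennreal (pmf xi k)) (ennreal x)) ts
       = map (\<lambda>t. ennreal (gw_weight (pmf xi) t * x ^ tsize t)) ts"
    using Node by auto
  then have "prod_list (map (Wt (\<lambda>k. ennreal (pmf xi k)) (ennreal x)) ts)
      = prod_list (map (\<lambda>t. ennreal (gw_weight (pmf xi) t * x ^ tsize t)) ts)" by (rule arg_cong)
  also have "\<dots> = ennreal (prod_list (map (\<lambda>t. gw_weight (pmf xi) t * x ^ tsize t) ts))"
    by (rule prod_list_ennreal) (use assms gw_weight_nonneg in auto)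
  finally have eq: "prod_list (map (Wt (\<lambda>k. ennreal (pmf xi k)) (ennreal x)) ts)
      = ennreal (prod_list (map (\<lambda>t. gw_weight (pmf xi) t * x ^ tsize t) ts))" .
  have nn1: "0 \<le> prod_list (map (gw_weight (pmf xi)) ts)"
    by (rule prod_list_nonneg) (auto simp: gw_weight_nonneg)
  have nn2: "0 \<le> prod_list (map (\<lambda>t. x ^ tsize t) ts)"
    by (rule prod_list_nonneg) (use assms in auto)
  have e2: "ennreal (prod_list (map (\<lambda>t. gw_weight (pmf xi) t * x ^ tsize t) ts))
     = ennreal (prod_list (map (gw_weight (pmf xi)) ts) * prod_list (map (\<lambda>t. x ^ tsize t) ts))"
    by (simp add: prod_list_mult_map)
  have "Wt (\<lambda>k. ennreal (pmf xi k)) (ennreal x) (Node ts)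
     = ennreal x * (ennreal (pmf xi (length ts)) * ennreal (prod_list (map (gw_weight (pmf xi)) ts) * prod_list (map (\<lambda>t. x ^ tsize t) ts)))"
    using eq e2 by simp
  also have "\<dots> = ennreal (x * (pmf xi (length ts) * (prod_list (map (gw_weight (pmf xi)) ts) * prod_list (map (\<lambda>t. x ^ tsize t) ts))))"
    using nn1 nn2 assms by (simp add: ennreal_mult)
  also have "\<dots> = ennreal (gw_weight (pmf xi) (Node ts) * x ^ tsize (Node ts))"
    by (simp add: pow_tsize algebra_simps)
  finally show ?case .
qed

lemma NI_Wt_eq:
  "NI (Wt p x) = x * (\<Sum>k. p k * (NI (Wt p x))^k)"
proof -
  have "NI (Wt p x) = NI (\<lambda>ts. Wt p x (Node ts))" by (rule NI_Node)
  also have "\<dots> = NI (\<lambda>ts. x * (p (length ts) * prod_list (map (Wt p x) ts)))" by simp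
  also have "\<dots> = x * NI (\<lambda>ts. p (length ts) * prod_list (map (Wt p x) ts))"
    by (rule nn_integral_cmult) simp
  also have "\<dots> = x * (\<Sum>k. p k * (NI (Wt p x))^k)" by (simp only: NI_list)
  finally show ?thesis .
qed

lemma Wt_trunc_le:
  assumes "x \<le> 1" and sum1: "(\<Sum>k. p k) = 1"
  shows "NI (\<lambda>t. Wt p x t * indicator {t. tsize t \<le> n} t) \<le> 1"
proof (induction n)
  case 0
  have "(\<lambda>t. Wt p x t * indicator {t. tsize t \<le> 0} t) = (\<lambda>_. 0)"
  proof -
    have "tsize t \<noteq> 0" for t using tsize_pos[of t] by simp
    then show ?thesis by (auto simp: fun_eq_iff indicator_def)
  qed
  then show ?case by simp
next
  case (Suc n)
  let ?T = "NI (\<lambda>t. Wt p x t * indicator {t. tsize t \<le> n} t)"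
  have pt: "Wt p x (Node ts) * indicator {t. tsize t \<le> Suc n} (Node ts)
      \<le> x * (p (length ts) * prod_list (map (\<lambda>t. Wt p x t * indicator {t. tsize t \<le> n} t) ts))" for ts
  proof (cases "tsize (Node ts) \<le> Suc n")
    case True
    then have "\<forall>t\<in>set ts. tsize t \<le> n"
      using member_le_sum_list[of _ "map tsize ts"] by fastforce
    then have "map (\<lambda>t. Wt p x t * indicator {t. tsize t \<le> n} t) ts = map (Wt p x) ts"
      by (auto simp: indicator_def)
    then have eqmap: "prod_list (map (\<lambda>t. Wt p x t * indicator {t. tsize t \<le> n} t) ts) = prod_list (map (Wt p x) ts)"
      by (rule arg_cong)
    have i1: "indicator {t. tsize t \<le> Suc n} (Node ts) = (1::ennreal)"
      using True by (simp add: indicator_def)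
    show ?thesis unfolding i1 eqmap by simp
  qed simp
  have "NI (\<lambda>t. Wt p x t * indicator {t. tsize t \<le> Suc n} t)
      = NI (\<lambda>ts. Wt p x (Node ts) * indicator {t. tsize t \<le> Suc n} (Node ts))"
    by (rule NI_Node)
  also have "\<dots> \<le> NI (\<lambda>ts. x * (p (length ts) * prod_list (map (\<lambda>t. Wt p x t * indicator {t. tsize t \<le> n} t) ts)))"
    by (rule nn_integral_mono) (rule pt)
  also have "\<dots> = x * NI (\<lambda>ts. p (length ts) * prod_list (map (\<lambda>t. Wt p x t * indicator {t. tsize t \<le> n} t) ts))"
    by (rule nn_integral_cmult) simp
  also have "\<dots> = x * (\<Sum>k. p k * ?T ^ k)" by (simp only: NI_list)
  also have "\<dots> \<le> 1 * (\<Sum>k. p k * 1)"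
  proof -
    have le: "p k * ?T ^ k \<le> p k * 1" for k
      using Suc power_mono[of ?T 1 k] by (intro mult_left_mono) auto
    have "(\<Sum>k. p k * ?T ^ k) \<le> (\<Sum>k. p k * 1)"
      by (rule suminf_le[OF le]) (auto intro: summableI)
    then show ?thesis using assms(1) by (intro mult_mono) auto
  qed
  also have "\<dots> = 1" using sum1 by simp
  finally show ?case .
qed

lemma NI_Wt_le1:
  assumes "x \<le> 1" and sum1: "(\<Sum>k. p k) = 1"
  shows "NI (Wt p x) \<le> 1"
proof -
  have "NI (Wt p x) = NI (\<lambda>t. SUP n. Wt p x t * indicator {t. tsize t \<le> n} t)"
  proof (rule nn_integral_cong)
    fix t
    show "Wt p x t = (SUP n. Wt p x t * indicator {t. tsize t \<le> n} t)"
    proof (rule antisym)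
      show "Wt p x t \<le> (SUP n. Wt p x t * indicator {t. tsize t \<le> n} t)"
        by (rule SUP_upper2[of "tsize t"]) auto
      show "(SUP n. Wt p x t * indicator {t. tsize t \<le> n} t) \<le> Wt p x t"
        by (rule SUP_least) (auto simp: indicator_def)
    qed
  qed
  also have "\<dots> = (SUP n. NI (\<lambda>t. Wt p x t * indicator {t. tsize t \<le> n} t))"
  proof (rule nn_integral_monotone_convergence_SUP)
    show "incseq (\<lambda>n t. Wt p x t * indicator {t. tsize t \<le> n} t)"
      by (auto simp: incseq_def le_fun_def indicator_def)
  qed simp
  also have "\<dots> \<le> 1"
    by (rule SUP_least) (rule Wt_trunc_le[OF assms])
  finally show ?thesis .
qed

lemma pmf_sum1: "(\<Sum>k. ennreal (pmf xi k)) = 1"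
proof -
  have "(\<Sum>k. ennreal (pmf xi k)) = NI (\<lambda>k. ennreal (pmf xi k))"
    by (simp add: nn_integral_count_space_nat)
  also have "\<dots> = emeasure (measure_pmf xi) UNIV" using nn_integral_pmf[where p=xi and A=UNIV] by simp
  also have "\<dots> = 1" using measure_pmf.emeasure_space_1[of xi] by simp
  finally show ?thesis .
qed



lemma pmf_sums:
  fixes f :: "nat \<Rightarrow> real"
  assumes "integrable (measure_pmf xi) f"
  shows "(\<lambda>k. pmf xi k * f k) sums measure_pmf.expectation xi f"
proof -
  have i: "integrable (count_space UNIV) (\<lambda>k. pmf xi k *\<^sub>R f k)"
    using assms integrable_density[of f "count_space UNIV" "pmf xi"]
    by (simp add: measure_pmf_eq_density[symmetric])
  have e: "measure_pmf.expectation xi f = integral\<^sup>L (count_space UNIV) (\<lambda>k. pmf xi k *\<^sub>R f k)"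
    using integral_density[of f "count_space UNIV" "pmf xi"]
    by (simp add: measure_pmf_eq_density[symmetric])
  show ?thesis using sums_integral_count_space_nat[OF i] e by simp
qed

lemma bounded_integrable:
  fixes f :: "nat \<Rightarrow> real"
  assumes "\<And>k. \<bar>f k\<bar> \<le> B"
  shows "integrable (measure_pmf xi) f"
  by (rule measure_pmf.integrable_const_bound[where B=B]) (use assms in auto)

lemma pgf_sums:
  assumes "\<bar>y\<bar> \<le> 1"
  shows "(\<lambda>k. pmf xi k * y^k) sums pgf xi y"
  unfolding pgf_def
proof (rule pmf_sums, rule bounded_integrable[where B=1])
  fix k show "\<bar>y ^ k\<bar> \<le> 1" using assms by (simp add: power_abs power_le_one)
qed

lemma pgf_one: "pgf xi 1 = 1"
proof -
  have e: "(\<lambda>k::nat. (1::real)^k) = (\<lambda>_. 1)" by auto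
  show ?thesis unfolding pgf_def e by simp
qed

lemma pmf_sums1: "(\<lambda>k. pmf xi k) sums 1"
  using pgf_sums[of 1 xi] by (simp add: pgf_one)

lemma crit_mean:
  assumes "critical_finvar xi"
  shows "(\<lambda>k. pmf xi k * real k) sums 1"
proof -
  have E: "measure_pmf.expectation xi real = 1" using assms by (simp add: critical_finvar_def)
  then have "integrable (measure_pmf xi) real"
    using not_integrable_integral_eq by fastforce
  from pmf_sums[OF this] E show ?thesis by simp
qed

lemma crit_support:
  assumes "critical_finvar xi"
  shows "\<exists>k\<ge>2. pmf xi k > 0"
proof (rule ccontr)
  assume nex: "\<not> ?thesis"
  have z: "pmf xi k = 0" if "k \<ge> 2" for k
  proof -
    from nex that have "\<not> pmf xi k > 0" by auto
    then show ?thesis using pmf_nonneg[of xi k] by linarith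
  qed
  have E: "measure_pmf.expectation xi real = 1" and V: "measure_pmf.variance xi real > 0"
    using assms by (auto simp: critical_finvar_def)
  from V E have Vp: "measure_pmf.expectation xi (\<lambda>k. (real k - 1)^2) > 0" by simp
  then have "integrable (measure_pmf xi) (\<lambda>k. (real k - 1)^2)"
    using not_integrable_integral_eq by fastforce
  from pmf_sums[OF this] have s1: "(\<lambda>k. pmf xi k * (real k - 1)^2) sums measure_pmf.expectation xi (\<lambda>k. (real k - 1)^2)" .
  have fin: "\<And>f. (\<lambda>k. pmf xi k * f k) sums (\<Sum>k\<in>{0,1}. pmf xi k * f k)"
    by (rule sums_finite) (use z in auto)
  from s1 fin[of "\<lambda>k. (real k - 1)^2"] have "measure_pmf.expectation xi (\<lambda>k. (real k - 1)^2) = pmf xi 0"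
    using sums_unique2 by fastforce
  moreover from crit_mean[OF assms] fin[of real] have "pmf xi 1 = 1"
    using sums_unique2 by fastforce
  moreover from pmf_sums1[of xi] fin[of "\<lambda>_. 1"] have "pmf xi 0 + pmf xi 1 = 1"
    using sums_unique2 by fastforce
  ultimately show False using Vp by simp
qed

lemma gfun_nonneg:
  fixes y :: real
  assumes "0 \<le> y" "y \<le> 1"
  shows "0 \<le> y^k - 1 - real k * (y - 1)"
proof (induction k)
  case (Suc k)
  have "y^Suc k - 1 - real (Suc k) * (y - 1) = (y^k - 1 - real k * (y - 1)) + (1 - y) * (1 - y^k)"
    by (simp add: algebra_simps)
  also have "\<dots> \<ge> 0" using Suc assms by (intro add_nonneg_nonneg mult_nonneg_nonneg) (auto simp: power_le_one)
  finally show ?case .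
qed simp

lemma gfun_pos:
  fixes y :: real
  assumes "0 \<le> y" "y < 1" "k \<ge> 2"
  shows "0 < y^k - 1 - real k * (y - 1)"
  using assms(3)
proof (induction k rule: dec_induct)
  case base
  have "y^2 - 1 - real 2 * (y - 1) = (1 - y)^2" by (simp add: power2_eq_square algebra_simps)
  then show ?case using assms by simp
next
  case (step k)
  have "y^Suc k - 1 - real (Suc k) * (y - 1) = (y^k - 1 - real k * (y - 1)) + (1 - y) * (1 - y^k)"
    by (simp add: algebra_simps)
  also have "\<dots> > 0" using step assms by (intro add_pos_nonneg mult_nonneg_nonneg) (auto simp: power_le_one)
  finally show ?case .
qed

lemma pgf_gt:
  assumes "critical_finvar xi" "0 \<le> y" "y < 1"
  shows "y < pgf xi y"
proof -
  obtain k0 where k0: "k0 \<ge> 2" "pmf xi k0 > 0" using crit_support[OF assms(1)] by blast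
  have s: "(\<lambda>k. pmf xi k * (y^k - 1 - real k * (y - 1))) sums (pgf xi y - 1 - 1 * (y - 1))"
  proof -
    have "(\<lambda>k. pmf xi k * y^k - pmf xi k - (pmf xi k * real k) * (y - 1)) sums (pgf xi y - 1 - 1 * (y - 1))"
      using assms by (intro sums_diff sums_mult2 pgf_sums pmf_sums1 crit_mean) auto
    then show ?thesis by (simp add: algebra_simps)
  qed
  have "0 < (\<Sum>k. pmf xi k * (y^k - 1 - real k * (y - 1)))"
  proof (rule suminf_pos2)
    show "summable (\<lambda>k. pmf xi k * (y^k - 1 - real k * (y - 1)))" using s by (rule sums_summable)
    show "0 \<le> pmf xi n * (y ^ n - 1 - real n * (y - 1))" for n
      using assms gfun_nonneg by auto
    show "0 < pmf xi k0 * (y ^ k0 - 1 - real k0 * (y - 1))"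
      using k0 assms gfun_pos by auto
  qed
  with sums_unique[OF s] show ?thesis by simp
qed

lemma convex_pow_nonneg: "convex_on {0::real..} (\<lambda>x. x^n)"
proof (cases "even n")
  case True
  then show ?thesis using convex_power_even convex_on_subset by blast
next
  case False
  then show ?thesis using convex_power_odd by blast
qed

lemma pgf_convex:
  assumes "0 \<le> a" "a \<le> 1" "0 \<le> c" "c \<le> 1" "0 \<le> t" "t \<le> 1"
  shows "pgf xi ((1 - t) * a + t * c) \<le> (1 - t) * pgf xi a + t * pgf xi c"
proof -
  have b: "0 \<le> (1 - t) * a + t * c" "(1 - t) * a + t * c \<le> 1"
    using assms by (auto intro: convex_bound_le[of a 1 c, simplified])
  have s1: "(\<lambda>k. pmf xi k * ((1 - t) * a + t * c)^k) sums pgf xi ((1 - t) * a + t * c)"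
    using b by (intro pgf_sums) auto
  have s2: "(\<lambda>k. (1 - t) * (pmf xi k * a^k) + t * (pmf xi k * c^k)) sums ((1 - t) * pgf xi a + t * pgf xi c)"
    using assms by (intro sums_add sums_mult pgf_sums) auto
  have "\<And>k. pmf xi k * ((1 - t) * a + t * c)^k \<le> (1 - t) * (pmf xi k * a^k) + t * (pmf xi k * c^k)"
  proof -
    fix k
    have "((1 - t) * a + t * c)^k \<le> (1 - t) * a^k + t * c^k"
      using convex_onD[OF convex_pow_nonneg[of k], of t a c] assms by simp
    then have "pmf xi k * ((1 - t) * a + t * c)^k \<le> pmf xi k * ((1 - t) * a^k + t * c^k)"
      by (rule mult_left_mono) simp
    then show "pmf xi k * ((1 - t) * a + t * c)^k \<le> (1 - t) * (pmf xi k * a^k) + t * (pmf xi k * c^k)"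
      by (simp add: algebra_simps)
  qed
  then show ?thesis using sums_le[OF _ s1 s2] by blast
qed

lemma pgf_nonneg: "0 \<le> y \<Longrightarrow> y \<le> 1 \<Longrightarrow> 0 \<le> pgf xi y"
  using sums_le[of "\<lambda>_. 0" "\<lambda>k. pmf xi k * y^k" 0 "pgf xi y"] pgf_sums[of y xi] by auto





lemma a_nonneg: "0 \<le> gw_size_prob xi n"
  unfolding gw_size_prob_def by (intro sum_nonneg) (simp add: gw_weight_nonneg)

lemma a0: "gw_size_prob xi 0 = 0"
proof -
  have ne: "tsize t \<noteq> 0" for t using tsize_pos[of t] by linarith
  have e: "{t. tsize t = 0} = {}" using ne by blast
  show ?thesis unfolding gw_size_prob_def e by simp
qed

lemma NI_finite_set:
  fixes f :: "'a \<Rightarrow> ennreal"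
  assumes "finite A"
  shows "NI (\<lambda>t. f t * indicator A t) = (\<Sum>t\<in>A. f t)"
  using nn_integral_indicator_finite[OF assms, of "count_space UNIV" f]
  by (simp add: emeasure_count_space_finite)

lemma SE_series:
  assumes "0 \<le> x"
  shows "NI (Wt (\<lambda>k. ennreal (pmf xi k)) (ennreal x)) = (\<Sum>n. ennreal (gw_size_prob xi n * x^n))"
proof -
  let ?W = "Wt (\<lambda>k. ennreal (pmf xi k)) (ennreal x)"
  have "NI ?W = NI (\<lambda>t. \<Sum>n. ?W t * indicator {t. tsize t = n} t)"
  proof (rule nn_integral_cong)
    fix t
    have "(\<lambda>n. ?W t * indicator {t. tsize t = n} t) = (\<lambda>n. if n = tsize t then ?W t else 0)"
      by (auto simp: indicator_def)
    then show "?W t = (\<Sum>n. ?W t * indicator {t. tsize t = n} t)"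
      using sums_unique[OF sums_single[of "tsize t" "\<lambda>_. ?W t"]] by simp
  qed
  also have "\<dots> = (\<Sum>n. NI (\<lambda>t. ?W t * indicator {t. tsize t = n} t))"
    by (rule nn_integral_suminf) simp
  also have "\<dots> = (\<Sum>n. ennreal (gw_size_prob xi n * x^n))"
  proof (rule arg_cong[where f=suminf], rule ext)
    fix n
    have "NI (\<lambda>t. ?W t * indicator {t. tsize t = n} t) = (\<Sum>t\<in>{t. tsize t = n}. ?W t)"
      by (rule NI_finite_set[OF finite_tsize_eq])
    also have "\<dots> = (\<Sum>t\<in>{t. tsize t = n}. ennreal (gw_weight (pmf xi) t * x^n))"
      by (rule sum.cong) (auto simp: Wt_real[OF assms])
    also have "\<dots> = ennreal (\<Sum>t\<in>{t. tsize t = n}. gw_weight (pmf xi) t * x^n)"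
      using assms gw_weight_nonneg by (intro sum_ennreal) auto
    also have "\<dots> = ennreal (gw_size_prob xi n * x^n)"
      unfolding gw_size_prob_def by (simp add: sum_distrib_right)
    finally show "NI (\<lambda>t. ?W t * indicator {t. tsize t = n} t) = ennreal (gw_size_prob xi n * x^n)" .
  qed
  finally show ?thesis .
qed

lemma pgf_ennreal:
  assumes "0 \<le> y" "y \<le> 1"
  shows "(\<Sum>k. ennreal (pmf xi k) * ennreal y ^ k) = ennreal (pgf xi y)"
proof -
  have "(\<Sum>k. ennreal (pmf xi k) * ennreal y ^ k) = (\<Sum>k. ennreal (pmf xi k * y ^ k))"
    using assms by (simp add: ennreal_mult ennreal_power)
  also have "\<dots> = ennreal (\<Sum>k. pmf xi k * y ^ k)"
    using assms pgf_sums[of y xi] by (intro suminf_ennreal2) (auto simp: sums_summable)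
  also have "\<dots> = ennreal (pgf xi y)"
    using assms pgf_sums[of y xi] by (simp add: sums_unique[symmetric])
  finally show ?thesis .
qed

definition GF :: "nat pmf \<Rightarrow> real \<Rightarrow> real" where
  "GF xi x = (\<Sum>n. gw_size_prob xi n * x^n)"

lemma GF_props:
  assumes "0 \<le> x" "x \<le> 1"
  shows "summable (\<lambda>n. gw_size_prob xi n * x^n)" "0 \<le> GF xi x" "GF xi x \<le> 1"
    "GF xi x = x * pgf xi (GF xi x)"
proof -
  let ?p = "\<lambda>k. ennreal (pmf xi k)"
  let ?S = "NI (Wt ?p (ennreal x))"
  have le: "?S \<le> 1"
    by (rule NI_Wt_le1) (use assms pmf_sum1 in auto)
  have nn: "\<And>n. 0 \<le> gw_size_prob xi n * x^n" using assms a_nonneg by simp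
  have S: "?S = (\<Sum>n. ennreal (gw_size_prob xi n * x^n))" by (rule SE_series[OF assms(1)])
  show sm: "summable (\<lambda>n. gw_size_prob xi n * x^n)"
    by (rule summable_suminf_not_top[OF nn]) (use le S in \<open>auto simp: top_unique\<close>)
  have S2: "?S = ennreal (GF xi x)"
    unfolding S GF_def by (rule suminf_ennreal2[OF nn sm])
  show nn2: "0 \<le> GF xi x" unfolding GF_def using sm nn by (rule suminf_nonneg)
  show le1: "GF xi x \<le> 1" using le S2 nn2 by simp
  have "?S = ennreal x * (\<Sum>k. ?p k * ?S ^ k)" by (rule NI_Wt_eq)
  also have "\<dots> = ennreal x * ennreal (pgf xi (GF xi x))"
    unfolding S2 using nn2 le1 by (simp add: pgf_ennreal)
  also have "\<dots> = ennreal (x * pgf xi (GF xi x))"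
    using assms pgf_nonneg[OF nn2 le1, of xi] by (simp add: ennreal_mult)
  finally have "ennreal (GF xi x) = ennreal (x * pgf xi (GF xi x))" using S2 by simp
  moreover have "0 \<le> x * pgf xi (GF xi x)" using assms nn2 le1 pgf_nonneg by simp
  ultimately show "GF xi x = x * pgf xi (GF xi x)" using nn2 by simp
qed



lemma h_conv:
  fixes x a b c :: real
  assumes "0 \<le> x" "0 \<le> a" "a < b" "b \<le> c" "c \<le> 1"
    and ha: "x * pgf xi a - a \<le> 0" and hc: "x * pgf xi c - c < 0"
  shows "x * pgf xi b - b < 0"
proof -
  define t where "t = (b - a) / (c - a)"
  have t: "0 < t" "t \<le> 1" using assms by (auto simp: t_def field_simps)
  have tc: "t * (c - a) = b - a" using assms by (simp add: t_def)
  have b: "b = (1 - t) * a + t * c"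
  proof -
    have "(1 - t) * a + t * c = a + t * (c - a)" by (simp add: algebra_simps)
    then show ?thesis using tc by simp
  qed
  have "pgf xi b \<le> (1 - t) * pgf xi a + t * pgf xi c"
    unfolding b using assms t by (intro pgf_convex) auto
  then have "x * pgf xi b \<le> x * ((1 - t) * pgf xi a + t * pgf xi c)"
    using assms by (intro mult_left_mono) auto
  also have "\<dots> - b = (1 - t) * (x * pgf xi a - a) + t * (x * pgf xi c - c)"
    by (simp add: b algebra_simps)
  finally have "x * pgf xi b - b \<le> (1 - t) * (x * pgf xi a - a) + t * (x * pgf xi c - c)" by simp
  also have "\<dots> < 0"
  proof -
    have "(1 - t) * (x * pgf xi a - a) \<le> 0" using t ha by (intro mult_nonneg_nonpos) auto
    moreover have "t * (x * pgf xi c - c) < 0" using t hc by (intro mult_pos_neg) auto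
    ultimately show ?thesis by simp
  qed
  finally show ?thesis .
qed

lemma dirA_GF:
  assumes c1: "critical_finvar xi1" and c2: "critical_finvar xi2"
    and P: "\<And>t. 0 < t \<Longrightarrow> t < 1 \<Longrightarrow> pgf xi1 t \<le> pgf xi2 t"
    and x: "0 < x" "x < 1"
  shows "GF xi1 x \<le> GF xi2 x"
proof (rule ccontr)
  assume "\<not> ?thesis"
  then have lt: "GF xi2 x < GF xi1 x" by simp
  note g1 = GF_props[of x xi1] and g2 = GF_props[of x xi2]
  have F2pos: "0 < GF xi2 x"
  proof (rule ccontr)
    assume "\<not> ?thesis"
    then have z: "GF xi2 x = 0" using g2(2) x by simp
    then have "x * pgf xi2 0 = 0" using g2(4) x by simp
    moreover have "0 < pgf xi2 0" using pgf_gt[OF c2, of 0] by simp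
    ultimately show False using x by simp
  qed
  have F2lt1: "GF xi2 x < 1" using lt g1 x by simp
  have ha: "x * pgf xi1 (GF xi2 x) - GF xi2 x \<le> 0"
  proof -
    have "x * pgf xi1 (GF xi2 x) \<le> x * pgf xi2 (GF xi2 x)"
      using P[OF F2pos F2lt1] x by (intro mult_left_mono) auto
    then show ?thesis using g2(4) x by simp
  qed
  have hc: "x * pgf xi1 1 - 1 < 0" using x by (simp add: pgf_one)
  have "x * pgf xi1 (GF xi1 x) - GF xi1 x < 0"
    by (rule h_conv[OF _ _ lt _ _ ha hc]) (use x g1 g2 in auto)
  then show False using g1 x by simp
qed

lemma dirB_pgf:
  assumes c1: "critical_finvar xi1" and c2: "critical_finvar xi2"
    and F: "\<And>x. 0 < x \<Longrightarrow> x < 1 \<Longrightarrow> GF xi1 x \<le> GF xi2 x"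
    and y: "0 < y" "y < 1"
  shows "pgf xi1 y \<le> pgf xi2 y"
proof (rule ccontr)
  assume "\<not> ?thesis"
  then have lt: "pgf xi2 y < pgf xi1 y" by simp
  have gt: "y < pgf xi1 y" using pgf_gt[OF c1] y by simp
  define x where "x = y / pgf xi1 y"
  have x: "0 < x" "x < 1" using gt y by (auto simp: x_def field_simps)
  have h1y: "x * pgf xi1 y - y = 0" using gt y by (simp add: x_def)
  note g1 = GF_props[of x xi1] and g2 = GF_props[of x xi2]
  have hc1: "x * pgf xi1 1 - 1 < 0" using x by (simp add: pgf_one)
  have hc2: "x * pgf xi2 1 - 1 < 0" using x by (simp add: pgf_one)
  have F1y: "y \<le> GF xi1 x"
  proof (rule ccontr)
    assume "\<not> ?thesis"
    then have "GF xi1 x < y" by simp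
    then have "x * pgf xi1 y - y < 0"
      by (intro h_conv[OF _ _ _ _ _ _ hc1]) (use x y g1 in auto)
    then show False using h1y by simp
  qed
  have F2y: "y \<le> GF xi2 x" using F1y F[OF x] by simp
  have h2y: "x * pgf xi2 y - y < 0" using lt x h1y
    by (smt (verit) mult_strict_left_mono)
  show False
  proof (cases "GF xi2 x = y")
    case True
    then show False using g2(4) h2y x by simp
  next
    case False
    then have "y < GF xi2 x" using F2y by simp
    then have "x * pgf xi2 (GF xi2 x) - GF xi2 x < 0"
      by (intro h_conv[OF _ _ _ _ _ _ hc2]) (use x y g2 h2y in auto)
    then show False using g2 x by simp
  qed
qed



lemma gamma_scaled:
  assumes b: "bb > 0" and c: "c > 0"
  shows "(\<integral>\<^sup>+ s. ennreal (indicator {0..} s * s powr (bb - 1) * exp (- (c * s))) \<partial>lborel)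
         = ennreal (Gamma bb * c powr (-bb))"
proof -
  let ?I = "(\<integral>\<^sup>+ s. ennreal (indicator {0..} s * s powr (bb - 1) * exp (- (c * s))) \<partial>lborel)"
  have "ennreal (Gamma bb) = (\<integral>\<^sup>+ u. ennreal (indicator {0..} u * u powr (bb - 1) / exp u) \<partial>lborel)"
    by (rule Gamma_conv_nn_integral_real[OF b])
  also have "\<dots> = ennreal \<bar>c\<bar> * (\<integral>\<^sup>+ s. ennreal (indicator {0..} (0 + c * s) * (0 + c * s) powr (bb - 1) / exp (0 + c * s)) \<partial>lborel)"
    by (rule nn_integral_real_affine) (use c in auto)
  also have "(\<integral>\<^sup>+ s. ennreal (indicator {0..} (0 + c * s) * (0 + c * s) powr (bb - 1) / exp (0 + c * s)) \<partial>lborel)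
      = (\<integral>\<^sup>+ s. ennreal (c powr (bb - 1)) * ennreal (indicator {0..} s * s powr (bb - 1) * exp (- (c * s))) \<partial>lborel)"
  proof (rule nn_integral_cong)
    fix s :: real
    show "ennreal (indicator {0..} (0 + c * s) * (0 + c * s) powr (bb - 1) / exp (0 + c * s))
        = ennreal (c powr (bb - 1)) * ennreal (indicator {0..} s * s powr (bb - 1) * exp (- (c * s)))"
    proof (cases "s \<ge> 0")
      case True
      have "(c * s) powr (bb - 1) = c powr (bb - 1) * s powr (bb - 1)"
        using True c by (simp add: powr_mult)
      moreover have "1 / exp (c * s) = exp (- (c * s))" by (simp add: exp_minus field_simps)
      ultimately show ?thesis using True c
        by (simp add: ennreal_mult[symmetric] field_simps exp_minus)
    next
      case False
      then have "c * s < 0" using c by (simp add: mult_pos_neg)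
      then show ?thesis using False by (simp add: indicator_def)
    qed
  qed
  also have "\<dots> = ennreal (c powr (bb - 1)) * ?I"
    by (rule nn_integral_cmult) simp
  finally have G: "ennreal (Gamma bb) = ennreal (c powr bb) * ?I"
    using c by (simp add: ennreal_mult[symmetric] mult.assoc[symmetric] powr_diff)
  have "ennreal (Gamma bb * c powr (-bb)) = ennreal (c powr (-bb)) * ennreal (Gamma bb)"
    using c Gamma_real_pos[OF b] by (simp add: ennreal_mult[symmetric] mult.commute)
  also have "\<dots> = ennreal (c powr (-bb) * c powr bb) * ?I"
    unfolding G using c by (simp add: ennreal_mult mult.assoc)
  also have "c powr (-bb) * c powr bb = 1" using c by (simp add: powr_add[symmetric])
  finally show ?thesis by simp
qed

lemma summable_moment:
  assumes A: "\<And>n. 0 \<le> A n" "summable A" and t: "t > 0" and a: "\<alpha> \<le> 0"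
  shows "summable (\<lambda>n. A n * (real n + t) powr \<alpha>)"
proof (rule summable_comparison_test[where g="\<lambda>n. A n * t powr \<alpha>"])
  show "summable (\<lambda>n. A n * t powr \<alpha>)" using A by (intro summable_mult2) auto
  show "\<exists>N. \<forall>n\<ge>N. norm (A n * (real n + t) powr \<alpha>) \<le> A n * t powr \<alpha>"
  proof (intro exI allI impI)
    fix n :: nat
    have "(real n + t) powr \<alpha> \<le> t powr \<alpha>" using t a by (intro powr_mono2') auto
    then show "norm (A n * (real n + t) powr \<alpha>) \<le> A n * t powr \<alpha>"
      using A(1)[of n] by (simp add: abs_mult mult_left_mono)
  qed
qed

lemma moment_repr:
  assumes A: "\<And>n. 0 \<le> A n" "summable A" and b: "bb > 0" and t: "t > 0"
  shows "ennreal (Gamma bb * (\<Sum>n. A n * (real n + t) powr (-bb)))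
    = (\<integral>\<^sup>+ s. ennreal (indicator {0..} s * s powr (bb - 1) * exp (- (t * s)) * (\<Sum>n. A n * exp (- s) ^ n)) \<partial>lborel)"
proof -
  define K where "K s = indicator {0..} s * s powr (bb - 1) * exp (- (t * s))" for s :: real
  have K0: "0 \<le> K s" for s by (simp add: K_def)
  have sm: "summable (\<lambda>n. A n * (real n + t) powr (-bb))"
    using A t b by (intro summable_moment) auto
  have G0: "0 < Gamma bb" using b by (rule Gamma_real_pos)
  have "ennreal (Gamma bb * (\<Sum>n. A n * (real n + t) powr (-bb)))
      = ennreal (\<Sum>n. Gamma bb * (A n * (real n + t) powr (-bb)))"
    using sm by (simp add: suminf_mult)
  also have "\<dots> = (\<Sum>n. ennreal (Gamma bb * (A n * (real n + t) powr (-bb))))"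
    using sm G0 A by (intro suminf_ennreal2[symmetric] summable_mult) auto
  also have "\<dots> = (\<Sum>n. \<integral>\<^sup>+ s. ennreal (A n * (K s * exp (- s) ^ n)) \<partial>lborel)"
  proof (rule arg_cong[where f=suminf], rule ext)
    fix n
    have c: "real n + t > 0" using t by simp
    have "(\<integral>\<^sup>+ s. ennreal (A n * (K s * exp (- s) ^ n)) \<partial>lborel)
        = (\<integral>\<^sup>+ s. ennreal (A n) * ennreal (indicator {0..} s * s powr (bb - 1) * exp (- ((real n + t) * s))) \<partial>lborel)"
    proof (rule nn_integral_cong)
      fix s :: real
      have e: "exp (- (t * s)) * exp (- s) ^ n = exp (- ((real n + t) * s))"
        by (simp add: exp_of_nat_mult[symmetric] exp_add[symmetric] algebra_simps)
      have "A n * (K s * exp (- s) ^ n) = A n * (indicator {0..} s * s powr (bb - 1) * exp (- ((real n + t) * s)))"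
        unfolding K_def e[symmetric] by (simp add: algebra_simps)
      then show "ennreal (A n * (K s * exp (- s) ^ n)) = ennreal (A n) * ennreal (indicator {0..} s * s powr (bb - 1) * exp (- ((real n + t) * s)))"
        by (simp only:) (rule ennreal_mult, simp_all add: A(1))
    qed
    also have "\<dots> = ennreal (A n) * ennreal (Gamma bb * (real n + t) powr (-bb))"
      by (subst nn_integral_cmult) (simp_all add: gamma_scaled[OF b c])
    also have "\<dots> = ennreal (Gamma bb * (A n * (real n + t) powr (-bb)))"
      using A(1)[of n] G0 by (simp add: ennreal_mult[symmetric] algebra_simps)
    finally show "ennreal (Gamma bb * (A n * (real n + t) powr (-bb))) = (\<integral>\<^sup>+ s. ennreal (A n * (K s * exp (- s) ^ n)) \<partial>lborel)" by simp
  qed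
  also have "\<dots> = (\<integral>\<^sup>+ s. (\<Sum>n. ennreal (A n * (K s * exp (- s) ^ n))) \<partial>lborel)"
    by (rule nn_integral_suminf[symmetric]) (simp add: K_def)
  also have "\<dots> = (\<integral>\<^sup>+ s. ennreal (K s * (\<Sum>n. A n * exp (- s) ^ n)) \<partial>lborel)"
  proof (rule nn_integral_cong)
    fix s :: real
    show "(\<Sum>n. ennreal (A n * (K s * exp (- s) ^ n))) = ennreal (K s * (\<Sum>n. A n * exp (- s) ^ n))"
    proof (cases "s \<ge> 0")
      case True
      have e1: "exp (- s) \<le> 1" using True by simp
      have sm2: "summable (\<lambda>n. A n * exp (- s) ^ n)"
      proof (rule summable_comparison_test[OF _ A(2)])
        show "\<exists>N. \<forall>n\<ge>N. norm (A n * exp (- s) ^ n) \<le> A n"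
          using A(1) e1 by (auto simp: abs_mult intro!: mult_left_le power_le_one)
      qed
      have "(\<Sum>n. ennreal (A n * (K s * exp (- s) ^ n))) = (\<Sum>n. ennreal (K s * (A n * exp (- s) ^ n)))"
        by (simp add: algebra_simps)
      also have "\<dots> = ennreal (\<Sum>n. K s * (A n * exp (- s) ^ n))"
        using sm2 A(1) K0 by (intro suminf_ennreal2 summable_mult) auto
      also have "\<dots> = ennreal (K s * (\<Sum>n. A n * exp (- s) ^ n))"
        using sm2 by (simp add: suminf_mult)
      finally show ?thesis .
    next
      case False
      then show ?thesis by (simp add: K_def)
    qed
  qed
  finally show ?thesis by (simp add: K_def)
qed

lemma dirA_moment:
  assumes A1: "\<And>n. 0 \<le> A1 n" "summable A1" and A2: "\<And>n. 0 \<le> A2 n" "summable A2"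
    and G: "\<And>x. 0 < x \<Longrightarrow> x < 1 \<Longrightarrow> (\<Sum>n. A1 n * x^n) \<le> (\<Sum>n. A2 n * x^n)"
    and a: "\<alpha> < 0" and t: "t > 0"
  shows "(\<Sum>n. A1 n * (real n + t) powr \<alpha>) \<le> (\<Sum>n. A2 n * (real n + t) powr \<alpha>)"
proof -
  define bb where "bb = - \<alpha>"
  have b: "bb > 0" using a by (simp add: bb_def)
  have al: "\<alpha> = - bb" by (simp add: bb_def)
  have G0: "0 < Gamma bb" using b by (rule Gamma_real_pos)
  have "ennreal (Gamma bb * (\<Sum>n. A1 n * (real n + t) powr (-bb)))
      \<le> ennreal (Gamma bb * (\<Sum>n. A2 n * (real n + t) powr (-bb)))"
    unfolding moment_repr[OF A1 b t] moment_repr[OF A2 b t]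
  proof (rule nn_integral_mono)
    fix s :: real
    show "ennreal (indicator {0..} s * s powr (bb - 1) * exp (- (t * s)) * (\<Sum>n. A1 n * exp (- s) ^ n))
        \<le> ennreal (indicator {0..} s * s powr (bb - 1) * exp (- (t * s)) * (\<Sum>n. A2 n * exp (- s) ^ n))"
    proof (cases "s > 0")
      case True
      have "(\<Sum>n. A1 n * exp (- s) ^ n) \<le> (\<Sum>n. A2 n * exp (- s) ^ n)"
        using True by (intro G) auto
      then show ?thesis by (intro ennreal_leI mult_left_mono) auto
    next
      case False
      then have zfact: "indicator {0..} s * s powr (bb - 1) = (0::real)"
        by (cases "s = 0") (auto simp: indicator_def)
      show ?thesis by (simp only: zfact mult_zero_left order_refl)
    qed
  qed
  moreover have "0 \<le> Gamma bb * (\<Sum>n. A2 n * (real n + t) powr (-bb))"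
    using G0 A2 by (intro mult_nonneg_nonneg suminf_nonneg summable_moment) (auto simp: t b less_imp_le)
  ultimately have "Gamma bb * (\<Sum>n. A1 n * (real n + t) powr (-bb)) \<le> Gamma bb * (\<Sum>n. A2 n * (real n + t) powr (-bb))"
    by (simp add: ennreal_le_iff)
  then show ?thesis using G0 unfolding al by simp
qed



lemma exp_limit_inv:
  fixes y :: real
  shows "(\<lambda>m. inverse ((1 + y / real m) ^ m)) \<longlonglongrightarrow> inverse (exp y)"
  by (intro tendsto_inverse tendsto_exp_limit_sequentially) simp

lemma pow_ge1: "0 \<le> y \<Longrightarrow> 1 \<le> (1 + y / real m) ^ m"
  by (intro one_le_power) simp

lemma tannery_app:
  assumes A: "\<And>n. 0 \<le> A n" "summable A" and c: "c > 0"
  shows "(\<lambda>m. \<Sum>n. A n * inverse ((1 + (real n / c) / real m) ^ m)) \<longlonglongrightarrow> (\<Sum>n. A n * inverse (exp (real n / c)))"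
proof -
  have "eventually (\<lambda>m. summable (\<lambda>k. norm (A k * inverse ((1 + (real k / c) / real m) ^ m)))) sequentially \<and>
        summable (\<lambda>n. norm (A n * inverse (exp (real n / c)))) \<and>
        ((\<lambda>m. \<Sum>n. A n * inverse ((1 + (real n / c) / real m) ^ m)) \<longlonglongrightarrow> (\<Sum>n. A n * inverse (exp (real n / c))))"
  proof (rule tannerys_theorem[where M=A])
    show "(\<lambda>m. A k * inverse ((1 + (real k / c) / real m) ^ m)) \<longlonglongrightarrow> A k * inverse (exp (real k / c))" for k
      by (intro tendsto_mult_left exp_limit_inv)
    show "\<forall>\<^sub>F (k, m) in at_top \<times>\<^sub>F sequentially. norm (A k * inverse ((1 + (real k / c) / real m) ^ m)) \<le> A k"
    proof (rule always_eventually, clarify)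
      fix k m :: nat
      have g: "1 \<le> (1 + (real k / c) / real m) ^ m" using c by (intro pow_ge1) simp
      then have "inverse ((1 + (real k / c) / real m) ^ m) \<le> 1" by (simp add: inverse_le_1_iff)
      moreover have "0 \<le> inverse ((1 + (real k / c) / real m) ^ m)" using g by simp
      ultimately show "norm (A k * inverse ((1 + (real k / c) / real m) ^ m)) \<le> A k"
        using A(1)[of k] by (simp add: abs_mult mult_left_le)
    qed
  qed (use A in auto)
  then show ?thesis by blast
qed

lemma moment_scaled:
  assumes A: "\<And>n. 0 \<le> A n" "summable A" and c: "c > 0" and m: "m \<ge> 1"
  shows "(\<Sum>n. A n * inverse ((1 + (real n / c) / real m) ^ m))
       = (real m * c) ^ m * (\<Sum>n. A n * (real n + real m * c) powr (- real m))"
proof -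
  have mc: "real m * c > 0" using c m by simp
  have sm: "summable (\<lambda>n. A n * (real n + real m * c) powr (- real m))"
    using A mc by (intro summable_moment) auto
  have pn: "A n * inverse ((1 + (real n / c) / real m) ^ m) = (real m * c) ^ m * (A n * (real n + real m * c) powr (- real m))" for n
  proof -
    have pos: "real n + real m * c > 0" using mc by simp
    have e1: "(real n + real m * c) powr (- real m) = inverse ((real n + real m * c) ^ m)"
      using pos by (simp add: powr_minus powr_realpow)
    have e2: "1 + (real n / c) / real m = (real n + real m * c) / (real m * c)"
      using mc m c by (simp add: field_simps)
    show ?thesis unfolding e1 e2 using mc pos
      by (simp add: power_divide field_simps)
  qed
  have fe: "(\<lambda>n. A n * inverse ((1 + (real n / c) / real m) ^ m))
      = (\<lambda>n. (real m * c) ^ m * (A n * (real n + real m * c) powr (- real m)))"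
    by (rule ext) (rule pn)
  have "(\<Sum>n. A n * inverse ((1 + (real n / c) / real m) ^ m))
      = (\<Sum>n. (real m * c) ^ m * (A n * (real n + real m * c) powr (- real m)))" by (simp only: fe)
  also have "\<dots> = (real m * c) ^ m * (\<Sum>n. A n * (real n + real m * c) powr (- real m))"
    using sm by (rule suminf_mult)
  finally show ?thesis .
qed

lemma dirB_limit:
  assumes A1: "\<And>n. 0 \<le> A1 n" "summable A1" and A2: "\<And>n. 0 \<le> A2 n" "summable A2"
    and H: "\<And>m t. m \<ge> 1 \<Longrightarrow> t > 0 \<Longrightarrow>
       (\<Sum>n. A1 n * (real n + t) powr (- real m)) \<le> (\<Sum>n. A2 n * (real n + t) powr (- real m))"
    and x: "0 < x" "x < 1"
  shows "(\<Sum>n. A1 n * x^n) \<le> (\<Sum>n. A2 n * x^n)"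
proof -
  define c where "c = - 1 / ln x"
  have lnx: "ln x < 0" using x by simp
  have c: "c > 0" using lnx by (simp add: c_def)
  have ex: "inverse (exp (real n / c)) = x ^ n" for n
  proof -
    have "real n / c = - (real n * ln x)" using lnx by (simp add: c_def field_simps)
    then have "inverse (exp (real n / c)) = exp (real n * ln x)" by (simp add: exp_minus)
    also have "\<dots> = exp (ln x) ^ n" by (simp add: exp_of_nat_mult)
    also have "\<dots> = x ^ n" using x by simp
    finally show ?thesis .
  qed
  have L1: "(\<lambda>m. \<Sum>n. A1 n * inverse ((1 + (real n / c) / real m) ^ m)) \<longlonglongrightarrow> (\<Sum>n. A1 n * x^n)"
    using tannery_app[OF A1 c] by (simp add: ex)
  have L2: "(\<lambda>m. \<Sum>n. A2 n * inverse ((1 + (real n / c) / real m) ^ m)) \<longlonglongrightarrow> (\<Sum>n. A2 n * x^n)"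
    using tannery_app[OF A2 c] by (simp add: ex)
  have ev: "eventually (\<lambda>m. (\<Sum>n. A1 n * inverse ((1 + (real n / c) / real m) ^ m))
                          \<le> (\<Sum>n. A2 n * inverse ((1 + (real n / c) / real m) ^ m))) sequentially"
  proof (rule eventually_sequentiallyI[of 1])
    fix m :: nat assume m: "m \<ge> 1"
    have mc: "real m * c > 0" using c m by simp
    have "(real m * c) ^ m * (\<Sum>n. A1 n * (real n + real m * c) powr (- real m))
        \<le> (real m * c) ^ m * (\<Sum>n. A2 n * (real n + real m * c) powr (- real m))"
      using H[OF m mc] mc by (intro mult_left_mono) auto
    then show "(\<Sum>n. A1 n * inverse ((1 + (real n / c) / real m) ^ m))
                          \<le> (\<Sum>n. A2 n * inverse ((1 + (real n / c) / real m) ^ m))"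
      unfolding moment_scaled[OF A1 c m] moment_scaled[OF A2 c m] .
  qed
  show ?thesis by (rule tendsto_le[OF _ L2 L1 ev]) simp
qed



lemma A_summable: "summable (\<lambda>n. gw_size_prob xi (Suc n))"
proof -
  have "summable (\<lambda>n. gw_size_prob xi n * 1^n)" by (rule GF_props(1)) auto
  then have "summable (\<lambda>n. gw_size_prob xi n)" by simp
  then show ?thesis by (simp only: summable_Suc_iff)
qed

lemma GF_shift:
  assumes "0 \<le> x" "x \<le> 1"
  shows "GF xi x = x * (\<Sum>n. gw_size_prob xi (Suc n) * x^n)"
proof -
  have sm: "summable (\<lambda>n. gw_size_prob xi n * x^n)" using assms by (rule GF_props(1))
  have sm2: "summable (\<lambda>n. gw_size_prob xi (Suc n) * x^(Suc n))"
    using summable_Suc_iff[of "\<lambda>n. gw_size_prob xi n * x^n"] sm by simp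
  have "(\<lambda>n. gw_size_prob xi (Suc n) * x^(Suc n)) sums (\<Sum>n. gw_size_prob xi (Suc n) * x^(Suc n))"
    using sm2 by (rule summable_sums)
  then have "(\<lambda>n. gw_size_prob xi n * x^n) sums ((\<Sum>n. gw_size_prob xi (Suc n) * x^(Suc n)) + gw_size_prob xi 0 * x^0)"
    by (rule sums_Suc)
  then have "GF xi x = (\<Sum>n. gw_size_prob xi (Suc n) * x^(Suc n))"
    unfolding GF_def by (simp add: a0 sums_unique[symmetric])
  also have "\<dots> = (\<Sum>n. x * (gw_size_prob xi (Suc n) * x^n))"
    by (simp add: algebra_simps)
  also have "\<dots> = x * (\<Sum>n. gw_size_prob xi (Suc n) * x^n)"
  proof (rule suminf_mult)
    show "summable (\<lambda>n. gw_size_prob xi (Suc n) * x^n)"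
    proof (rule summable_comparison_test[OF _ A_summable[of xi]])
      show "\<exists>N. \<forall>n\<ge>N. norm (gw_size_prob xi (Suc n) * x ^ n) \<le> gw_size_prob xi (Suc n)"
        using assms a_nonneg by (auto simp: abs_mult intro!: mult_left_le power_le_one)
    qed
  qed
  finally show ?thesis .
qed

lemma GF_le_iff_G:
  assumes "0 < x" "x \<le> 1"
  shows "GF xi1 x \<le> GF xi2 x \<longleftrightarrow>
    (\<Sum>n. gw_size_prob xi1 (Suc n) * x^n) \<le> (\<Sum>n. gw_size_prob xi2 (Suc n) * x^n)"
  using assms by (simp add: GF_shift)

lemma gw_moment_eq: "gw_moment xi \<alpha> t = (\<Sum>n. gw_size_prob xi (Suc n) * (real n + t) powr \<alpha>)"
  by (simp add: gw_moment_def)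

theorem theorem6p5:
  fixes xi1 xi2 :: "nat pmf"
  assumes "critical_finvar xi1" and "critical_finvar xi2"
  shows "((\<forall>\<alpha>::int. \<alpha> < 0 \<longrightarrow> (\<forall>t::real. t > 0 \<longrightarrow>
              gw_moment xi1 (real_of_int \<alpha>) t \<le> gw_moment xi2 (real_of_int \<alpha>) t))
          \<longleftrightarrow> (\<forall>t::real. 0 < t \<and> t < 1 \<longrightarrow> pgf xi1 t \<le> pgf xi2 t))
       \<and> ((\<forall>t::real. 0 < t \<and> t < 1 \<longrightarrow> pgf xi1 t \<le> pgf xi2 t) \<longrightarrow>
          (\<forall>\<alpha>::real. \<alpha> < 0 \<longrightarrow> (\<forall>t::real. t > 0 \<longrightarrow>
              gw_moment xi1 \<alpha> t \<le> gw_moment xi2 \<alpha> t)))"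
proof -
  note c1 = assms(1) and c2 = assms(2)
  let ?A1 = "\<lambda>n. gw_size_prob xi1 (Suc n)"
  let ?A2 = "\<lambda>n. gw_size_prob xi2 (Suc n)"
  have A1: "\<And>n. 0 \<le> ?A1 n" "summable ?A1" by (simp_all add: a_nonneg A_summable)
  have A2: "\<And>n. 0 \<le> ?A2 n" "summable ?A2" by (simp_all add: a_nonneg A_summable)
  let ?P = "\<forall>t::real. 0 < t \<and> t < 1 \<longrightarrow> pgf xi1 t \<le> pgf xi2 t"
  let ?R = "\<forall>\<alpha>::real. \<alpha> < 0 \<longrightarrow> (\<forall>t::real. t > 0 \<longrightarrow> gw_moment xi1 \<alpha> t \<le> gw_moment xi2 \<alpha> t)"
  let ?I = "\<forall>\<alpha>::int. \<alpha> < 0 \<longrightarrow> (\<forall>t::real. t > 0 \<longrightarrow>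
              gw_moment xi1 (real_of_int \<alpha>) t \<le> gw_moment xi2 (real_of_int \<alpha>) t)"
  have PR: "?P \<Longrightarrow> ?R"
  proof -
    assume P: ?P
    have G: "(\<Sum>n. ?A1 n * x^n) \<le> (\<Sum>n. ?A2 n * x^n)" if "0 < x" "x < 1" for x
    proof -
      have "GF xi1 x \<le> GF xi2 x"
        by (rule dirA_GF[OF c1 c2 _ that]) (use P in auto)
      then show ?thesis using GF_le_iff_G[of x xi1 xi2] that by simp
    qed
    show ?R unfolding gw_moment_eq
      by (intro allI impI dirA_moment[OF A1 A2 G]) auto
  qed
  have RI: "?R \<Longrightarrow> ?I" by auto
  have IP: "?I \<Longrightarrow> ?P"
  proof -
    assume I: ?I
    have H: "(\<Sum>n. ?A1 n * (real n + t) powr (- real m)) \<le> (\<Sum>n. ?A2 n * (real n + t) powr (- real m))"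
      if "m \<ge> 1" "t > 0" for m :: nat and t :: real
    proof -
      have "- int m < 0" using that by simp
      then have "gw_moment xi1 (real_of_int (- int m)) t \<le> gw_moment xi2 (real_of_int (- int m)) t"
        using I that by blast
      then show ?thesis by (simp add: gw_moment_eq)
    qed
    have F: "GF xi1 x \<le> GF xi2 x" if "0 < x" "x < 1" for x
      using dirB_limit[OF A1 A2 H that] GF_le_iff_G[of x xi1 xi2] that by simp
    show ?P using dirB_pgf[OF c1 c2 F] by auto
  qed
  show ?thesis using PR RI IP by blast
qed

end
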